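(* Let $\mathbf C$ be the middle-third Cantor set, $s=\log_32$, $\mathcal R=\bigcup\{\mathbf C+k/3^n:k,n\in\mathbb Z\}$, and $\mathfrak H^s$ the $s$-dimensional Hausdorff measure restricted to $\mathcal R$. If $\varphi:\mathcal R\to\mathbb C$ is Borel measurable, has bounded support (i.e. $\{x\in\mathcal R:\varphi(x)\ne0\}$ is bounded), and satisfies $\varphi(x)=\varphi(3x)+\varphi(3x-2)$ for all $x\in\mathcal R$, then $\varphi$ is a constant multiple of $\chi_{\mathbf C}$ up to a set of $\mathfrak H^s$-measure zero. *)

theory Defs
  imports "HOL-Analysis.Analysis"
begin

definition cantor_set :: "real set" where
  "cantor_set = {x. \<exists>d::nat \<Rightarrow> real. (\<forall>i. d i \<in> {0, 2}) \<and> (\<lambda>i. d i / 3 ^ Suc i) sums x}"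

definition cantor_R :: "real set" where
  "cantor_R = (\<Union>k::int. \<Union>n::int. (\<lambda>x. x + of_int k / 3 powi n) ` cantor_set)"

text \<open>Hausdorff outer measure (Caratheodory construction, unnormalised),
  on subsets of the real line, with countable covers by bounded sets.\<close>
definition hausdorff_pre :: "real \<Rightarrow> real \<Rightarrow> real set \<Rightarrow> ennreal" where
  "hausdorff_pre s \<delta> A =
     (INF U \<in> {U :: nat \<Rightarrow> real set. A \<subseteq> (\<Union>i. U i) \<and> (\<forall>i. bounded (U i) \<and> diameter (U i) \<le> \<delta>)}.
        (\<Sum>i. ennreal (diameter (U i) powr s)))"

definition hausdorff_outer :: "real \<Rightarrow> real set \<Rightarrow> ennreal" where
  "hausdorff_outer s A = (SUP \<delta> \<in> {0<..}. hausdorff_pre s \<delta> A)"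

end

theory Submission
  imports Defs
begin


definition cf :: "(nat \<Rightarrow> real) \<Rightarrow> real" where "cf d = (\<Sum>i. d i / 3 ^ Suc i)"
definition dig :: "(nat \<Rightarrow> real) \<Rightarrow> bool" where "dig d \<longleftrightarrow> (\<forall>i. d i \<in> {0,2})"

lemma geo3_sums: "(\<lambda>i. 2 / 3 ^ Suc i :: real) sums 1"
proof -
  have "(\<lambda>i. (2/3) * (1/3::real) ^ i) sums ((2/3) * (1 / (1 - 1/3)))"
    by (intro sums_mult geometric_sums) auto
  then show ?thesis by (simp add: field_simps)
qed

lemma dig_summable: assumes "dig d" shows "summable (\<lambda>i. d i / 3 ^ Suc i)"
proof (rule summable_comparison_test'[OF sums_summable[OF geo3_sums], of 0])
  fix i :: nat
  have "d i = 0 \<or> d i = 2" using assms by (auto simp: dig_def)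
  then show "norm (d i / 3 ^ Suc i) \<le> 2 / 3 ^ Suc i" by auto
qed

lemma cf_sums: "dig d \<Longrightarrow> (\<lambda>i. d i / 3 ^ Suc i) sums cf d"
  using dig_summable cf_def summable_sums by fastforce

lemma cantor_set_eq: "cantor_set = {cf d | d. dig d}"
proof (intro set_eqI iffI)
  fix x assume "x \<in> cantor_set"
  then obtain d where d: "\<forall>i. d i \<in> {0, 2}" "(\<lambda>i. d i / 3 ^ Suc i) sums x" by (auto simp: cantor_set_def)
  then have "dig d" by (simp add: dig_def)
  moreover have "x = cf d" using d(2) cf_sums[OF \<open>dig d\<close>] sums_unique2 by blast
  ultimately show "x \<in> {cf d | d. dig d}" by blast
next
  fix x assume "x \<in> {cf d | d. dig d}"
  then obtain d where "dig d" "x = cf d" by blast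
  then show "x \<in> cantor_set" using cf_sums unfolding cantor_set_def dig_def by blast
qed

lemma cf_nonneg: assumes "dig d" shows "0 \<le> cf d"
proof -
  have "\<And>i. 0 \<le> d i" using assms by (auto simp: dig_def) (metis empty_iff insert_iff order_refl zero_le_numeral)
  then show ?thesis unfolding cf_def by (intro suminf_nonneg dig_summable assms) auto
qed

lemma cf_le1: "dig d \<Longrightarrow> cf d \<le> 1"
proof -
  assume d: "dig d"
  have "cf d \<le> (\<Sum>i. 2 / 3 ^ Suc i)" unfolding cf_def
    apply (rule suminf_le[OF _ dig_summable[OF d] sums_summable[OF geo3_sums]])
    subgoal for i using d unfolding dig_def by (cases "d i = 0") auto
    done
  then show ?thesis using geo3_sums sums_unique by fastforce
qed

lemma dig_shift: "dig d \<Longrightarrow> dig (\<lambda>i. d (Suc i))" by (auto simp: dig_def)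

lemma cf_shift: "dig d \<Longrightarrow> 3 * cf d = d 0 + cf (\<lambda>i. d (Suc i))"
proof -
  assume d: "dig d"
  have s: "summable (\<lambda>i. d i / 3 ^ Suc i)" using dig_summable[OF d] .
  have "(\<Sum>i. d (Suc i) / 3 ^ Suc (Suc i)) = cf d - d 0 / 3"
    using suminf_split_head[OF s] by (simp add: cf_def)
  moreover have "(\<Sum>i. d (Suc i) / 3 ^ Suc (Suc i)) = cf (\<lambda>i. d (Suc i)) / 3"
    unfolding cf_def using suminf_divide[OF dig_summable[OF dig_shift[OF d]], of 3]
    by (simp add: field_simps)
  ultimately show ?thesis by simp
qed

lemma dig_cons: "a \<in> {0,2} \<Longrightarrow> dig d \<Longrightarrow> dig (case_nat a d)"
  by (auto simp: dig_def split: nat.splits)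

lemma cf_cons: "a \<in> {0,2} \<Longrightarrow> dig d \<Longrightarrow> cf (case_nat a d) = (a + cf d) / 3"
  using cf_shift[OF dig_cons, of a d] by simp

lemma cf_zero: "cf (\<lambda>_. 0) = 0" by (simp add: cf_def)
lemma cf_two: "cf (\<lambda>_. 2) = 1" using geo3_sums by (simp add: cf_def sums_iff)

lemma cf_iter: "dig d \<Longrightarrow> 3 ^ n * cf d = (\<Sum>i<n. d i * 3 ^ (n - 1 - i)) + cf (\<lambda>i. d (i + n))"
proof (induction n)
  case 0 then show ?case by simp
next
  case (Suc n)
  have dn: "dig (\<lambda>i. d (i + n))" using Suc.prems by (auto simp: dig_def)
  have "3 ^ Suc n * cf d = 3 * (\<Sum>i<n. d i * 3 ^ (n - 1 - i)) + 3 * cf (\<lambda>i. d (i + n))"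
    using Suc by (simp add: algebra_simps)
  also have "3 * cf (\<lambda>i. d (i + n)) = d n + cf (\<lambda>i. d (i + Suc n))"
    using cf_shift[OF dn] by simp
  also have "3 * (\<Sum>i<n. d i * 3 ^ (n - 1 - i)) = (\<Sum>i<n. d i * 3 ^ (Suc n - 1 - i))"
    unfolding sum_distrib_left
    by (rule sum.cong) (auto simp: Suc_diff_Suc power_Suc[symmetric] simp del: power_Suc)
  finally show ?case by simp
qed

lemma dig_Ints: assumes "dig d" shows "(\<Sum>i<n. d i * 3 ^ (n - 1 - i)) \<in> \<int>"
proof -
  have "d i \<in> \<int>" for i using assms unfolding dig_def by (cases "d i = 0") auto
  then show ?thesis by (intro Ints_sum Ints_mult Ints_power) auto
qed

lemma cf_iter_int: "dig d \<Longrightarrow> \<exists>j::int. 3 ^ n * cf d = of_int j + cf (\<lambda>i. d (i + n))"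
  using cf_iter dig_Ints by (metis Ints_cases)

lemma cantor_01: assumes "c \<in> cantor_set" shows "0 \<le> c \<and> c \<le> 1"
proof -
  obtain d where d: "dig d" "c = cf d" using assms by (auto simp: cantor_set_eq)
  then show ?thesis using cf_nonneg cf_le1 by auto
qed

lemma cantor_div3: assumes "c \<in> cantor_set" shows "c / 3 \<in> cantor_set"
proof -
  obtain d where d: "dig d" "c = cf d" using assms by (auto simp: cantor_set_eq)
  have "cf (case_nat 0 d) = c / 3" using cf_cons[of 0 d] d by simp
  then show ?thesis using dig_cons[of 0 d] d by (auto simp: cantor_set_eq intro!: exI[of _ "case_nat 0 d"])
qed

lemma cantor_div3pow: "c \<in> cantor_set \<Longrightarrow> c / 3 ^ n \<in> cantor_set"
  by (induction n) (auto dest: cantor_div3 simp: field_simps)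

lemma cantor_3: "c \<in> cantor_set \<Longrightarrow> (3 * c \<in> cantor_set \<and> c \<le> 1/3) \<or> (3 * c - 2 \<in> cantor_set \<and> c \<ge> 2/3)"
proof -
  assume "c \<in> cantor_set"
  then obtain d where d: "dig d" "c = cf d" by (auto simp: cantor_set_eq)
  have s: "3 * c = d 0 + cf (\<lambda>i. d (Suc i))" using cf_shift d by simp
  have m: "cf (\<lambda>i. d (Suc i)) \<in> cantor_set" using d dig_shift unfolding cantor_set_eq by blast
  have "d 0 = 0 \<or> d 0 = 2" using d by (auto simp: dig_def)
  then show ?thesis using s m cantor_01[OF m] by auto
qed

lemma cantor_iff3: "x \<in> cantor_set \<longleftrightarrow> 3 * x \<in> cantor_set \<or> 3 * x - 2 \<in> cantor_set"
proof
  assume "x \<in> cantor_set" then show "3 * x \<in> cantor_set \<or> 3 * x - 2 \<in> cantor_set"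
    using cantor_3 by blast
next
  assume "3 * x \<in> cantor_set \<or> 3 * x - 2 \<in> cantor_set"
  then show "x \<in> cantor_set"
  proof
    assume "3 * x \<in> cantor_set" then show ?thesis using cantor_div3[of "3*x"] by simp
  next
    assume a: "3 * x - 2 \<in> cantor_set"
    then obtain d where d: "dig d" "3 * x - 2 = cf d" by (auto simp: cantor_set_eq)
    have "cf (case_nat 2 d) = x" using cf_cons[of 2 d] d by simp
    then show ?thesis using dig_cons[of 2 d] d by (auto simp: cantor_set_eq intro!: exI[of _ "case_nat 2 d"])
  qed
qed

lemma cantor_not_both: "\<not> (3 * x \<in> cantor_set \<and> 3 * x - 2 \<in> cantor_set)"
  using cantor_01[of "3*x"] cantor_01[of "3*x-2"] by auto

lemma indicator_cantor_3: "(indicator cantor_set x :: complex) = indicator cantor_set (3*x) + indicator cantor_set (3*x-2)"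
  using cantor_iff3[of x] cantor_not_both[of x] by (auto simp: indicator_def)

lemma cantor_mul3: assumes "c \<in> cantor_set" shows "\<exists>c'\<in>cantor_set. \<exists>j::int. 3 * c = c' + of_int j"
proof -
  from cantor_3[OF assms] show ?thesis
  proof
    assume "3 * c \<in> cantor_set \<and> c \<le> 1/3"
    then show ?thesis by (intro bexI[of _ "3*c"] exI[of _ 0]) auto
  next
    assume "3 * c - 2 \<in> cantor_set \<and> c \<ge> 2/3"
    then show ?thesis by (intro bexI[of _ "3*c-2"] exI[of _ 2]) auto
  qed
qed

lemma cantor_mul3pow: "c \<in> cantor_set \<Longrightarrow> \<exists>j::int. 3 ^ n * c - of_int j \<in> cantor_set"
proof -
  assume "c \<in> cantor_set"
  then obtain d where d: "dig d" "c = cf d" by (auto simp: cantor_set_eq)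
  obtain j where "3 ^ n * cf d = of_int j + cf (\<lambda>i. d (i + n))" using cf_iter_int d by blast
  moreover have "dig (\<lambda>i. d (i + n))" using d by (auto simp: dig_def)
  ultimately show ?thesis using d by (auto simp: cantor_set_eq intro!: exI[of _ j] exI[of _ "\<lambda>i. d (i+n)"])
qed

lemma R_char: "x \<in> cantor_R \<longleftrightarrow> (\<exists>n::nat. \<exists>m::int. \<exists>c\<in>cantor_set. x = (c + of_int m) / 3 ^ n)"
proof
  assume "x \<in> cantor_R"
  then obtain k n' c where c: "c \<in> cantor_set" and x: "x = c + of_int k / 3 powi n'"
    by (auto simp: cantor_R_def)
  show "\<exists>n::nat. \<exists>m::int. \<exists>c\<in>cantor_set. x = (c + of_int m) / 3 ^ n"
  proof (cases "n' \<ge> 0")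
    case True
    define N where "N = nat n'"
    have x': "x = c + of_int k / 3 ^ N" using True x by (simp add: power_int_def N_def)
    obtain j where j: "3 ^ N * c - of_int j \<in> cantor_set" using cantor_mul3pow[OF c] by blast
    have "x = ((3 ^ N * c - of_int j) + of_int (j + k)) / 3 ^ N" using x' by (simp add: field_simps)
    then show ?thesis using j by blast
  next
    case False
    define N where "N = nat (-n')"
    have x': "x = c + of_int k * 3 ^ N" using False x by (simp add: power_int_def N_def field_simps)
    have "x = (c + of_int (k * 3 ^ N)) / 3 ^ 0" using x' by simp
    then show ?thesis using c by blast
  qed
next
  assume "\<exists>n::nat. \<exists>m::int. \<exists>c\<in>cantor_set. x = (c + of_int m) / 3 ^ n"
  then obtain n m c where c: "c \<in> cantor_set" and x: "x = (c + of_int m) / 3 ^ n" by blast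
  have "x = c / 3 ^ n + of_int m / 3 powi (int n)" using x by (simp add: add_divide_distrib)
  then show "x \<in> cantor_R" unfolding cantor_R_def using cantor_div3pow[OF c] by blast
qed

lemma R_mul3: "x \<in> cantor_R \<Longrightarrow> 3 * x \<in> cantor_R"
proof -
  assume "x \<in> cantor_R"
  then obtain n m c where c: "c \<in> cantor_set" and x: "x = (c + of_int m) / 3 ^ n" by (auto simp: R_char)
  obtain c' j where c': "c' \<in> cantor_set" "3 * c = c' + of_int j" using cantor_mul3[OF c] by blast
  have "3 * x = (c' + of_int (j + 3 * m)) / 3 ^ n" using x c' by (simp add: field_simps)
  then show ?thesis using c' by (auto simp: R_char intro!: exI[of _ n] exI[of _ "j + 3*m"] bexI[of _ c'])
qed

lemma R_minus_int: "x \<in> cantor_R \<Longrightarrow> x - of_int k \<in> cantor_R"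
proof -
  assume "x \<in> cantor_R"
  then obtain n m c where c: "c \<in> cantor_set" and x: "x = (c + of_int m) / 3 ^ n" by (auto simp: R_char)
  have "x - of_int k = (c + of_int (m - k * 3 ^ n)) / 3 ^ n" using x by (simp add: field_simps)
  then show ?thesis using c by (auto simp: R_char intro!: exI[of _ n] exI[of _ "m - k * 3 ^ n"] bexI[of _ c])
qed

lemma cantor_plus_int_R: "c \<in> cantor_set \<Longrightarrow> c + of_int k \<in> cantor_R"
  by (auto simp: R_char intro!: exI[of _ 0] exI[of _ k])


locale sol =
  fixes \<phi> :: "real \<Rightarrow> complex" and M :: real
  assumes feq: "\<And>x. x \<in> cantor_R \<Longrightarrow> \<phi> x = \<phi> (3 * x) + \<phi> (3 * x - 2)"
  and supp: "\<And>x. x \<in> cantor_R \<Longrightarrow> \<phi> x \<noteq> 0 \<Longrightarrow> \<bar>x\<bar> \<le> M"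
begin

lemma step:
  assumes d: "dig d"
  obtains a :: int where "a \<in> {0,2}" "d 0 = of_int a"
    "\<phi> (cf d + of_int k) = \<phi> (cf (\<lambda>i. d (Suc i)) + of_int (3*k + a)) + \<phi> (cf (\<lambda>i. d (Suc i)) + of_int (3*k + a - 2))"
proof -
  have C: "cf d \<in> cantor_set" using d by (auto simp: cantor_set_eq)
  have e: "\<phi> (cf d + of_int k) = \<phi> (3 * (cf d + of_int k)) + \<phi> (3 * (cf d + of_int k) - 2)"
    by (rule feq[OF cantor_plus_int_R[OF C]])
  have s: "3 * cf d = d 0 + cf (\<lambda>i. d (Suc i))" using cf_shift[OF d] .
  have "d 0 = 0 \<or> d 0 = 2" using d by (auto simp: dig_def)
  then show ?thesis
  proof
    assume h: "d 0 = 0"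
    have "3 * (cf d + of_int k) = cf (\<lambda>i. d (Suc i)) + of_int (3*k + 0)"
         "3 * (cf d + of_int k) - 2 = cf (\<lambda>i. d (Suc i)) + of_int (3*k + 0 - 2)"
      using s h by (simp_all add: algebra_simps)
    then have eq3: "\<phi> (cf d + of_int k) = \<phi> (cf (\<lambda>i. d (Suc i)) + of_int (3*k + 0)) + \<phi> (cf (\<lambda>i. d (Suc i)) + of_int (3*k + 0 - 2))"
      using e by (simp add: algebra_simps)
    show ?thesis by (rule that[OF _ _ eq3]) (use h in auto)
  next
    assume h: "d 0 = 2"
    have "3 * (cf d + of_int k) = cf (\<lambda>i. d (Suc i)) + of_int (3*k + 2)"
         "3 * (cf d + of_int k) - 2 = cf (\<lambda>i. d (Suc i)) + of_int (3*k + 2 - 2)"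
      using s h by (simp_all add: algebra_simps)
    then have eq3: "\<phi> (cf d + of_int k) = \<phi> (cf (\<lambda>i. d (Suc i)) + of_int (3*k + 2)) + \<phi> (cf (\<lambda>i. d (Suc i)) + of_int (3*k + 2 - 2))"
      using e by (simp add: algebra_simps)
    show ?thesis by (rule that[OF _ _ eq3]) (use h in auto)
  qed
qed

lemma vanish_pos: "dig d \<Longrightarrow> 2 \<le> k \<Longrightarrow> M < real_of_int k + real n \<Longrightarrow> \<phi> (cf d + of_int k) = 0"
proof (induction n arbitrary: d k)
  case 0
  have "0 \<le> cf d" using cf_nonneg[OF "0.prems"(1)] .
  then have "\<bar>cf d + of_int k\<bar> > M" using 0 by auto
  then show ?case using supp[OF cantor_plus_int_R] "0.prems"(1) by (force simp: cantor_set_eq)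
next
  case (Suc n)
  obtain a :: int where a: "a \<in> {0,2}"
    "\<phi> (cf d + of_int k) = \<phi> (cf (\<lambda>i. d (Suc i)) + of_int (3*k + a)) + \<phi> (cf (\<lambda>i. d (Suc i)) + of_int (3*k + a - 2))"
    using step[OF Suc.prems(1)] by metis
  have d': "dig (\<lambda>i. d (Suc i))" using dig_shift[OF Suc.prems(1)] .
  have "\<phi> (cf (\<lambda>i. d (Suc i)) + of_int (3*k + a)) = 0"
    by (rule Suc.IH[OF d']) (use a Suc.prems in auto)
  moreover have "\<phi> (cf (\<lambda>i. d (Suc i)) + of_int (3*k + a - 2)) = 0"
    by (rule Suc.IH[OF d']) (use a Suc.prems in auto)
  ultimately show ?case using a by simp
qed

lemma vanish_neg: "dig d \<Longrightarrow> k \<le> -2 \<Longrightarrow> real_of_int k - real n < - M - 1 \<Longrightarrow> \<phi> (cf d + of_int k) = 0"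
proof (induction n arbitrary: d k)
  case 0
  have "cf d \<le> 1" using cf_le1[OF "0.prems"(1)] .
  then have "\<bar>cf d + of_int k\<bar> > M" using 0 by auto
  then show ?case using supp[OF cantor_plus_int_R] "0.prems"(1) by (force simp: cantor_set_eq)
next
  case (Suc n)
  obtain a :: int where a: "a \<in> {0,2}"
    "\<phi> (cf d + of_int k) = \<phi> (cf (\<lambda>i. d (Suc i)) + of_int (3*k + a)) + \<phi> (cf (\<lambda>i. d (Suc i)) + of_int (3*k + a - 2))"
    using step[OF Suc.prems(1)] by metis
  have d': "dig (\<lambda>i. d (Suc i))" using dig_shift[OF Suc.prems(1)] .
  have "\<phi> (cf (\<lambda>i. d (Suc i)) + of_int (3*k + a)) = 0"
    by (rule Suc.IH[OF d']) (use a Suc.prems in auto)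
  moreover have "\<phi> (cf (\<lambda>i. d (Suc i)) + of_int (3*k + a - 2)) = 0"
    by (rule Suc.IH[OF d']) (use a Suc.prems in auto)
  ultimately show ?case using a by simp
qed

lemma vanish: assumes "dig d" "\<bar>k\<bar> \<ge> 2" shows "\<phi> (cf d + of_int k) = 0"
proof -
  define n where "n = nat \<lceil>\<bar>M\<bar>\<rceil>"
  have n: "real n \<ge> \<bar>M\<bar>" unfolding n_def by linarith
  show ?thesis
  proof (cases "k \<ge> 2")
    case True
    show ?thesis by (rule vanish_pos[OF assms(1) True, of n]) (use n True in linarith)
  next
    case False
    then have "k \<le> -2" using assms by auto
    then show ?thesis by (intro vanish_neg[OF assms(1), of _ n]) (use n in linarith)+
  qed
qed

lemma vanish_C: "c \<in> cantor_set \<Longrightarrow> \<bar>k\<bar> \<ge> 2 \<Longrightarrow> \<phi> (c + of_int k) = 0"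
  using vanish by (auto simp: cantor_set_eq)

lemma vanish_small: assumes "dig d"
  shows "\<phi> (cf d + 5) = 0 \<and> \<phi> (cf d + 3) = 0 \<and> \<phi> (cf d + 2) = 0 \<and> \<phi> (cf d - 2) = 0 \<and> \<phi> (cf d - 3) = 0 \<and> \<phi> (cf d - 5) = 0"
  using vanish[OF assms, of 5] vanish[OF assms, of 3] vanish[OF assms, of 2]
    vanish[OF assms, of "-2"] vanish[OF assms, of "-3"] vanish[OF assms, of "-5"] by simp

lemma plus1: "dig d \<Longrightarrow> d j = 2 \<Longrightarrow> \<phi> (cf d + of_int 1) = 0"
proof (induction j arbitrary: d)
  case 0
  obtain a :: int where a: "a \<in> {0,2}" "d 0 = of_int a"
    "\<phi> (cf d + of_int 1) = \<phi> (cf (\<lambda>i. d (Suc i)) + of_int (3*1 + a)) + \<phi> (cf (\<lambda>i. d (Suc i)) + of_int (3*1 + a - 2))"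
    using step[OF "0.prems"(1)] by metis
  have "a = 2" using a "0.prems" by auto
  then show ?case using a vanish_small[OF dig_shift[OF "0.prems"(1)]] by simp
next
  case (Suc j)
  obtain a :: int where a: "a \<in> {0,2}" "d 0 = of_int a"
    "\<phi> (cf d + of_int 1) = \<phi> (cf (\<lambda>i. d (Suc i)) + of_int (3*1 + a)) + \<phi> (cf (\<lambda>i. d (Suc i)) + of_int (3*1 + a - 2))"
    using step[OF Suc.prems(1)] by metis
  have ih: "\<phi> (cf (\<lambda>i. d (Suc i)) + of_int 1) = 0"
    using Suc.IH[OF dig_shift[OF Suc.prems(1)]] Suc.prems by simp
  show ?case using a vanish_small[OF dig_shift[OF Suc.prems(1)]] ih by auto
qed

lemma minus1: "dig d \<Longrightarrow> d j = 0 \<Longrightarrow> \<phi> (cf d + of_int (-1)) = 0"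
proof (induction j arbitrary: d)
  case 0
  obtain a :: int where a: "a \<in> {0,2}" "d 0 = of_int a"
    "\<phi> (cf d + of_int (-1)) = \<phi> (cf (\<lambda>i. d (Suc i)) + of_int (3*(-1) + a)) + \<phi> (cf (\<lambda>i. d (Suc i)) + of_int (3*(-1) + a - 2))"
    using step[OF "0.prems"(1)] by metis
  have "a = 0" using a "0.prems" by auto
  then show ?case using a vanish_small[OF dig_shift[OF "0.prems"(1)]] by simp
next
  case (Suc j)
  obtain a :: int where a: "a \<in> {0,2}" "d 0 = of_int a"
    "\<phi> (cf d + of_int (-1)) = \<phi> (cf (\<lambda>i. d (Suc i)) + of_int (3*(-1) + a)) + \<phi> (cf (\<lambda>i. d (Suc i)) + of_int (3*(-1) + a - 2))"
    using step[OF Suc.prems(1)] by metis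
  have ih: "\<phi> (cf (\<lambda>i. d (Suc i)) + of_int (-1)) = 0"
    using Suc.IH[OF dig_shift[OF Suc.prems(1)]] Suc.prems by simp
  show ?case using a vanish_small[OF dig_shift[OF Suc.prems(1)]] ih by auto
qed

lemma shift_inv: "dig d \<Longrightarrow> \<phi> (cf d) = \<phi> (cf (\<lambda>i. d (Suc i)))"
proof -
  assume d: "dig d"
  obtain a :: int where a: "a \<in> {0,2}" "d 0 = of_int a"
    "\<phi> (cf d + of_int 0) = \<phi> (cf (\<lambda>i. d (Suc i)) + of_int (3*0 + a)) + \<phi> (cf (\<lambda>i. d (Suc i)) + of_int (3*0 + a - 2))"
    using step[OF d] by metis
  then show ?thesis using vanish_small[OF dig_shift[OF d]] by auto
qed

lemma plus1_C: assumes "c \<in> cantor_set" "c \<noteq> 0" shows "\<phi> (c + 1) = 0"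
proof -
  obtain d where d: "dig d" "c = cf d" using assms by (auto simp: cantor_set_eq)
  have "\<exists>j. d j = 2"
  proof (rule ccontr)
    assume "\<not> (\<exists>j. d j = 2)"
    then have "d = (\<lambda>_. 0)" using d by (auto simp: dig_def)
    then show False using d assms cf_zero by simp
  qed
  then show ?thesis using plus1 d by fastforce
qed

lemma minus1_C: assumes "c \<in> cantor_set" "c \<noteq> 1" shows "\<phi> (c - 1) = 0"
proof -
  obtain d where d: "dig d" "c = cf d" using assms by (auto simp: cantor_set_eq)
  have "\<exists>j. d j = 0"
  proof (rule ccontr)
    assume "\<not> (\<exists>j. d j = 0)"
    then have "d = (\<lambda>_. 2)" using d by (auto simp: dig_def)
    then show False using d assms cf_two by simp
  qed
  then show ?thesis using minus1 d by fastforce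
qed

lemma classify:
  assumes c: "c \<in> cantor_set" "c \<noteq> 0" "c \<noteq> 1" "\<phi> c = c0"
  shows "\<phi> ((c + of_int m) / 3 ^ n) = c0 * indicator cantor_set ((c + of_int m) / 3 ^ n)"
proof (induction n arbitrary: m)
  case 0
  have c01: "0 \<le> c" "c \<le> 1" using cantor_01[OF c(1)] by auto
  consider "m = 0" | "m = 1" | "m = -1" | "\<bar>m\<bar> \<ge> 2" by linarith
  then show ?case
  proof cases
    case 1 then show ?thesis using c by (simp add: indicator_def)
  next
    case 2
    have "c + 1 \<notin> cantor_set" using cantor_01[of "c+1"] c01 c by auto
    then show ?thesis using 2 plus1_C[OF c(1,2)] by (simp add: indicator_def)
  next
    case 3
    have "c - 1 \<notin> cantor_set" using cantor_01[of "c-1"] c01 c by auto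
    then show ?thesis using 3 minus1_C[OF c(1,3)] by (simp add: indicator_def)
  next
    case 4
    have "c + of_int m \<notin> cantor_set" using cantor_01[of "c+ of_int m"] c01 4 by (auto simp: abs_if split: if_splits)
    then show ?thesis using vanish_C[OF c(1) 4] by (simp add: indicator_def)
  qed
next
  case (Suc n)
  define x where "x = (c + of_int m) / 3 ^ Suc n"
  have xR: "x \<in> cantor_R" unfolding x_def R_char using c by blast
  have e1: "3 * x = (c + of_int m) / 3 ^ n" unfolding x_def by (simp add: field_simps)
  have e2: "3 * x - 2 = (c + of_int (m - 2 * 3 ^ n)) / 3 ^ n" unfolding x_def by (simp add: field_simps)
  have "\<phi> x = \<phi> (3 * x) + \<phi> (3 * x - 2)" by (rule feq[OF xR])
  also have "\<dots> = c0 * indicator cantor_set (3 * x) + c0 * indicator cantor_set (3 * x - 2)"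
  proof -
    have "\<phi> (3 * x) = c0 * indicator cantor_set (3 * x)" by (simp only: e1 Suc.IH)
    moreover have "\<phi> (3 * x - 2) = c0 * indicator cantor_set (3 * x - 2)" by (simp only: e2 Suc.IH)
    ultimately show ?thesis by simp
  qed
  also have "\<dots> = c0 * indicator cantor_set x"
    using indicator_cantor_3[of x] by (simp add: distrib_left)
  finally show ?case unfolding x_def .
qed

end


definition nullH :: "real \<Rightarrow> real set \<Rightarrow> bool" where
  "nullH s A \<longleftrightarrow> hausdorff_outer s A = 0"

definition covers :: "real \<Rightarrow> real set \<Rightarrow> (nat \<Rightarrow> real set) set" where
  "covers \<delta> A = {U :: nat \<Rightarrow> real set. A \<subseteq> (\<Union>i. U i) \<and> (\<forall>i. bounded (U i) \<and> diameter (U i) \<le> \<delta>)}"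

lemma hp_eq: "hausdorff_pre s \<delta> A = (INF U\<in>covers \<delta> A. (\<Sum>i. ennreal (diameter (U i) powr s)))"
  unfolding hausdorff_pre_def covers_def by simp

lemma nullH_iff:
  "nullH s A \<longleftrightarrow> (\<forall>\<delta>>0. \<forall>\<epsilon>>0. \<exists>U\<in>covers \<delta> A. (\<Sum>i. ennreal (diameter (U i) powr s)) < ennreal \<epsilon>)"
proof -
  have pre: "hausdorff_pre s \<delta> A = 0 \<longleftrightarrow> (\<forall>\<epsilon>>0. \<exists>U\<in>covers \<delta> A. (\<Sum>i. ennreal (diameter (U i) powr s)) < ennreal \<epsilon>)" for \<delta>
  proof
    assume h: "hausdorff_pre s \<delta> A = 0"
    show "\<forall>\<epsilon>>0. \<exists>U\<in>covers \<delta> A. (\<Sum>i. ennreal (diameter (U i) powr s)) < ennreal \<epsilon>"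
    proof (intro allI impI)
      fix \<epsilon> :: real assume "\<epsilon> > 0"
      then have "hausdorff_pre s \<delta> A < ennreal \<epsilon>" using h by simp
      then show "\<exists>U\<in>covers \<delta> A. (\<Sum>i. ennreal (diameter (U i) powr s)) < ennreal \<epsilon>"
        unfolding hp_eq INF_less_iff .
    qed
  next
    assume h: "\<forall>\<epsilon>>0. \<exists>U\<in>covers \<delta> A. (\<Sum>i. ennreal (diameter (U i) powr s)) < ennreal \<epsilon>"
    have le: "hausdorff_pre s \<delta> A \<le> 0 + ennreal e" if "e > 0" for e
    proof -
      have "hausdorff_pre s \<delta> A < ennreal e"
        using h that unfolding hp_eq INF_less_iff by blast
      then show ?thesis by simp
    qed
    have "hausdorff_pre s \<delta> A \<le> 0" by (rule ennreal_le_epsilon) (rule le, assumption)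
    then show "hausdorff_pre s \<delta> A = 0" by simp
  qed
  have "nullH s A \<longleftrightarrow> (\<forall>\<delta>\<in>{0<..}. hausdorff_pre s \<delta> A = 0)"
    unfolding nullH_def hausdorff_outer_def
    using SUP_bot_conv(1)[of "\<lambda>\<delta>. hausdorff_pre s \<delta> A" "{0<..}"] unfolding bot_ennreal .
  then show ?thesis by (simp only: pre greaterThan_iff Ball_def)
qed

lemma covers_mono: "A \<subseteq> B \<Longrightarrow> U \<in> covers \<delta> B \<Longrightarrow> U \<in> covers \<delta> A"
  unfolding covers_def by auto

lemma nullH_mono: assumes "A \<subseteq> B" "nullH s B" shows "nullH s A"
  unfolding nullH_iff
proof (intro allI impI)
  fix \<delta> \<epsilon> :: real assume "\<delta> > 0" "\<epsilon> > 0"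
  then obtain U where "U \<in> covers \<delta> B" "(\<Sum>i. ennreal (diameter (U i) powr s)) < ennreal \<epsilon>"
    using assms(2) unfolding nullH_iff by blast
  then show "\<exists>U\<in>covers \<delta> A. (\<Sum>i. ennreal (diameter (U i) powr s)) < ennreal \<epsilon>"
    using covers_mono[OF assms(1)] by blast
qed

lemma nullH_UN:
  assumes h: "\<And>k::nat. nullH s (A k)"
  shows "nullH s (\<Union>k. A k)"
  unfolding nullH_iff
proof (intro allI impI)
  fix \<delta> \<epsilon> :: real assume d: "\<delta> > 0" and e: "\<epsilon> > 0"
  have "\<forall>k. \<exists>U\<in>covers \<delta> (A k). (\<Sum>i. ennreal (diameter (U i) powr s)) < ennreal (\<epsilon> / 2 ^ (k+2))"
    using h d e unfolding nullH_iff by simp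
  then obtain U where U: "\<And>k. U k \<in> covers \<delta> (A k)"
    "\<And>k. (\<Sum>i. ennreal (diameter (U k i) powr s)) < ennreal (\<epsilon> / 2 ^ (k+2))"
    by metis
  define V where "V j = U (fst (prod_decode j)) (snd (prod_decode j))" for j
  have "V \<in> covers \<delta> (\<Union>k. A k)"
  proof -
    have 1: "(\<Union>k. A k) \<subseteq> (\<Union>j. V j)"
    proof
      fix x assume "x \<in> (\<Union>k. A k)"
      then obtain k where "x \<in> A k" by blast
      then obtain i where "x \<in> U k i" using U(1)[of k] unfolding covers_def by blast
      then have "x \<in> V (prod_encode (k, i))" by (simp add: V_def)
      then show "x \<in> (\<Union>j. V j)" by blast
    qed
    have 2: "\<forall>j. bounded (V j) \<and> diameter (V j) \<le> \<delta>"
    proof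
      fix j
      show "bounded (V j) \<and> diameter (V j) \<le> \<delta>"
        using U(1)[of "fst (prod_decode j)"] unfolding covers_def V_def by simp
    qed
    show ?thesis unfolding covers_def using 1 2 by simp
  qed
  have "(\<Sum>j. ennreal (diameter (V j) powr s)) = (\<Sum>k. \<Sum>i. ennreal (diameter (U k i) powr s))"
    unfolding V_def
    by (rule suminf_ennreal_2dimen[of "\<lambda>k. \<Sum>i. ennreal (diameter (U k i) powr s)" "\<lambda>p. ennreal (diameter (U (fst p) (snd p)) powr s)"]) (simp only: fst_conv snd_conv)
  also have "\<dots> \<le> (\<Sum>k. ennreal (\<epsilon> / 2 ^ (k+2)))"
    by (intro suminf_le) (use U(2) in \<open>auto intro: less_imp_le\<close>)
  also have "\<dots> = ennreal (\<epsilon> / 2)"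
  proof -
    have f: "(\<lambda>k. \<epsilon> / 2 ^ (k+2)) = (\<lambda>k. (\<epsilon>/4) * (1/2::real) ^ k)"
      by (auto simp: power_add power_one_over field_simps)
    have "(\<lambda>k. (\<epsilon>/4) * (1/2::real) ^ k) sums ((\<epsilon>/4) * (1 / (1 - 1/2)))"
      by (intro sums_mult geometric_sums) auto
    then have gs: "(\<lambda>k. \<epsilon> / 2 ^ (k+2)) sums (\<epsilon>/2)" unfolding f by simp
    have "(\<Sum>k. ennreal (\<epsilon> / 2 ^ (k+2))) = ennreal (\<Sum>k. \<epsilon> / 2 ^ (k+2))"
      using e by (intro suminf_ennreal2 sums_summable[OF gs]) auto
    then show ?thesis using gs sums_unique by metis
  qed
  also have "ennreal (\<epsilon> / 2) < ennreal \<epsilon>" using e by (simp add: ennreal_lessI)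
  finally show "\<exists>V\<in>covers \<delta> (\<Union>k. A k). (\<Sum>i. ennreal (diameter (V i) powr s)) < ennreal \<epsilon>"
    using \<open>V \<in> covers \<delta> (\<Union>k. A k)\<close> by blast
qed

lemma nullH_singleton: "nullH s {x}"
  unfolding nullH_iff
proof (intro allI impI)
  fix \<delta> \<epsilon> :: real assume "\<delta> > 0" "\<epsilon> > 0"
  moreover have "(\<lambda>_. {x}) \<in> covers \<delta> {x}" using \<open>\<delta> > 0\<close> by (simp add: covers_def)
  ultimately show "\<exists>U\<in>covers \<delta> {x}. (\<Sum>i. ennreal (diameter (U i) powr s)) < ennreal \<epsilon>"
    by (intro bexI[of _ "\<lambda>_. {x}"]) auto
qed

lemma nullH_empty: "nullH s {}"
  using nullH_mono[OF _ nullH_singleton] by blast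

lemma nullH_UN_countable:
  assumes "countable I" "\<And>k. k \<in> I \<Longrightarrow> nullH s (A k)"
  shows "nullH s (\<Union>k\<in>I. A k)"
proof (cases "I = {}")
  case True
  then show ?thesis using nullH_empty by simp
next
  case False
  have "(\<Union>k\<in>I. A k) = (\<Union>j. A (from_nat_into I j))"
    using range_from_nat_into[OF False assms(1)] by (metis UN_simps(10) image_image)
  moreover have "nullH s (\<Union>j. A (from_nat_into I j))"
    using assms False by (intro nullH_UN) (simp add: from_nat_into)
  ultimately show ?thesis by simp
qed


lemma nullH_countable: "countable A \<Longrightarrow> nullH s A"
  using nullH_UN_countable[where I=A and A="\<lambda>x. {x}" and s=s] nullH_singleton by simp

lemma nullH_Un: assumes a: "nullH s A" and b: "nullH s B" shows "nullH s (A \<union> B)"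
proof -
  let ?F = "\<lambda>k::nat. if k = 0 then A else B"
  have "nullH s (\<Union>k. ?F k)" by (rule nullH_UN) (simp add: a b)
  moreover have "A \<union> B \<subseteq> ?F 0 \<union> ?F 1" by simp
  moreover have "?F 0 \<union> ?F 1 \<subseteq> (\<Union>k. ?F k)" by (intro Un_least UN_upper) auto
  ultimately show ?thesis using nullH_mono by (meson order_trans)
qed

lemma nullH_lip:
  assumes lip: "\<And>x y. dist (f x) (f y) \<le> dist x y" and s: "0 \<le> s" and N: "nullH s A"
  shows "nullH s (f ` A)"
  unfolding nullH_iff
proof (intro allI impI)
  fix \<delta> \<epsilon> :: real assume d: "\<delta> > 0" and e: "\<epsilon> > 0"
  obtain U where U: "U \<in> covers \<delta> A" "(\<Sum>i. ennreal (diameter (U i) powr s)) < ennreal \<epsilon>"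
    using N d e unfolding nullH_iff by blast
  have b: "bounded (f ` U i) \<and> diameter (f ` U i) \<le> diameter (U i)" for i
  proof -
    have bU: "bounded (U i)" using U(1) by (auto simp: covers_def)
    then obtain a r where ar: "\<And>y. y \<in> U i \<Longrightarrow> dist a y \<le> r" unfolding bounded_def by blast
    have bf: "bounded (f ` U i)" unfolding bounded_def
      by (rule exI[of _ "f a"], rule exI[of _ r]) (use ar lip order_trans in blast)
    have "diameter (f ` U i) \<le> diameter (U i)"
    proof (rule diameter_le)
      show "f ` U i \<noteq> {} \<or> 0 \<le> diameter (U i)" by (simp add: diameter_ge_0 bU)
      fix x y assume "x \<in> f ` U i" "y \<in> f ` U i"
      then obtain x' y' where "x' \<in> U i" "y' \<in> U i" "x = f x'" "y = f y'" by blast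
      then show "norm (x - y) \<le> diameter (U i)"
        using lip[of x' y'] diameter_bounded_bound[OF bU, of x' y'] by (simp add: dist_norm)
    qed
    then show ?thesis using bf by simp
  qed
  define V where "V i = f ` U i" for i
  have "V \<in> covers \<delta> (f ` A)" using U(1) b unfolding covers_def V_def
    by (auto intro: order_trans) (blast)
  moreover have "(\<Sum>i. ennreal (diameter (V i) powr s)) \<le> (\<Sum>i. ennreal (diameter (U i) powr s))"
    unfolding V_def using b s
    by (intro suminf_le) (auto intro!: ennreal_leI powr_mono2 diameter_ge_0)
  ultimately show "\<exists>V\<in>covers \<delta> (f ` A). (\<Sum>i. ennreal (diameter (V i) powr s)) < ennreal \<epsilon>"
    using U(2) by (meson order.strict_trans1)
qed


definition tbit :: "real \<Rightarrow> nat \<Rightarrow> int" where "tbit y i = \<lfloor>2 ^ Suc i * y\<rfloor> mod 2"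
definition bdig :: "real \<Rightarrow> nat \<Rightarrow> real" where "bdig y i = 2 * of_int (tbit y i)"
definition bmap :: "real \<Rightarrow> real" where "bmap y = cf (bdig y)"

lemma tbit_01: "tbit y i = 0 \<or> tbit y i = 1"
  unfolding tbit_def by auto

lemma dig_bdig: "dig (bdig y)"
  unfolding dig_def bdig_def using tbit_01 by (metis insert_iff mult_zero_right of_int_0 of_int_1 mult.right_neutral)

lemma bmap_C: "bmap y \<in> cantor_set"
  unfolding bmap_def cantor_set_eq using dig_bdig by blast

lemma tbit_double: "tbit (2 * y) i = tbit y (Suc i)"
  unfolding tbit_def by (simp add: mult.assoc)

lemma tbit_plus1: "tbit (y + 1) i = tbit y i"
proof -
  have "2 ^ Suc i * (y + 1) = 2 ^ Suc i * y + of_int (2 ^ Suc i)" by (simp add: algebra_simps)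
  then have "\<lfloor>2 ^ Suc i * (y + 1)\<rfloor> = \<lfloor>2 ^ Suc i * y\<rfloor> + 2 ^ Suc i"
    by (metis floor_add_int)
  then show ?thesis unfolding tbit_def by simp
qed

lemma bmap_double: "bmap (2 * y) = cf (\<lambda>i. bdig y (Suc i))"
  unfolding bmap_def bdig_def tbit_double ..

lemma bmap_plus1: "bmap (y + 1) = bmap y"
  unfolding bmap_def bdig_def tbit_plus1 ..

lemma bmap_measurable: "bmap \<in> borel_measurable borel"
proof -
  have "(\<lambda>y. bdig y i / 3 ^ Suc i) \<in> borel_measurable borel" for i
    unfolding bdig_def tbit_def by measurable
  then show ?thesis unfolding bmap_def cf_def by (rule borel_measurable_suminf)
qed

definition yv :: "(nat \<Rightarrow> real) \<Rightarrow> real" where "yv e = (\<Sum>i. e i / 2 ^ Suc i)"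
definition bin :: "(nat \<Rightarrow> real) \<Rightarrow> bool" where "bin e \<longleftrightarrow> (\<forall>i. e i \<in> {0,1}) \<and> (\<forall>n. \<exists>i\<ge>n. e i = 0)"

lemma geo2_sums: "(\<lambda>i. 1 / 2 ^ Suc i :: real) sums 1"
proof -
  have "(\<lambda>i. (1/2) * (1/2::real) ^ i) sums ((1/2) * (1 / (1 - 1/2)))"
    by (intro sums_mult geometric_sums) auto
  then show ?thesis by (simp add: power_one_over field_simps)
qed

lemma bin_summable: fixes e :: "nat \<Rightarrow> real" assumes "\<forall>i. e i \<in> {0,1}" shows "summable (\<lambda>i. e i / 2 ^ Suc i)"
proof (rule summable_comparison_test'[OF sums_summable[OF geo2_sums], of 0])
  fix i :: nat
  have "e i = 0 \<or> e i = 1" using assms by auto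
  then show "norm (e i / 2 ^ Suc i) \<le> 1 / 2 ^ Suc i" by auto
qed

lemma bin_shift: "bin e \<Longrightarrow> bin (\<lambda>i. e (Suc i))"
  unfolding bin_def by (metis Suc_le_D Suc_le_mono le_SucI)

lemma yv_shift: fixes e :: "nat \<Rightarrow> real" assumes "\<forall>i. e i \<in> {0,1}" shows "2 * yv e = e 0 + yv (\<lambda>i. e (Suc i))"
proof -
  have s: "summable (\<lambda>i. e i / 2 ^ Suc i)" using bin_summable[OF assms] .
  have s': "summable (\<lambda>i. e (Suc i) / 2 ^ Suc i)" using bin_summable[of "\<lambda>i. e (Suc i)"] assms by simp
  have "(\<Sum>i. e (Suc i) / 2 ^ Suc (Suc i)) = yv e - e 0 / 2"
    using suminf_split_head[OF s] by (simp add: yv_def)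
  moreover have "(\<Sum>i. e (Suc i) / 2 ^ Suc (Suc i)) = yv (\<lambda>i. e (Suc i)) / 2"
    unfolding yv_def using suminf_divide[OF s', of 2] by (simp add: field_simps)
  ultimately show ?thesis by simp
qed

lemma yv_bounds: assumes "bin e" shows "0 \<le> yv e \<and> yv e < 1"
proof -
  have e: "\<forall>i. e i \<in> {0,1}" using assms by (simp add: bin_def)
  obtain j where j: "e j = 0" using assms unfolding bin_def by blast
  have e': "e i = 0 \<or> e i = 1" for i using e by blast
  have nn: "0 \<le> e i / 2 ^ Suc i" for i using e'[of i] by auto
  have nn2: "0 \<le> (1 - e i) / 2 ^ Suc i" for i using e'[of i] by auto
  have "0 \<le> yv e" unfolding yv_def
    by (rule suminf_nonneg[OF bin_summable[OF e]]) (rule nn)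
  moreover
  have sd: "(\<lambda>i. (1 - e i) / 2 ^ Suc i) sums (1 - yv e)"
    using sums_diff[OF geo2_sums summable_sums[OF bin_summable[OF e]]] unfolding yv_def
    by (simp add: diff_divide_distrib)
  have "0 < (\<Sum>i. (1 - e i) / 2 ^ Suc i)"
    by (rule suminf_pos2[OF sums_summable[OF sd], of j]) (use nn2 j in auto)
  then have "yv e < 1" using sd sums_unique by fastforce
  ultimately show ?thesis by simp
qed

lemma tbit_yv: "bin e \<Longrightarrow> of_int (tbit (yv e) i) = e i"
proof (induction i arbitrary: e)
  case 0
  have e: "\<forall>i. e i \<in> {0,1}" using "0.prems" by (simp add: bin_def)
  have b: "0 \<le> yv (\<lambda>i. e (Suc i)) \<and> yv (\<lambda>i. e (Suc i)) < 1" using yv_bounds[OF bin_shift[OF "0.prems"]] .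
  have "e 0 = 0 \<or> e 0 = 1" using e by auto
  then show ?case
  proof
    assume h: "e 0 = 0"
    have "\<lfloor>2 * yv e\<rfloor> = 0" using yv_shift[OF e] h b by (simp add: floor_eq_iff)
    then show ?thesis using h by (simp add: tbit_def)
  next
    assume h: "e 0 = 1"
    have "\<lfloor>2 * yv e\<rfloor> = 1" using yv_shift[OF e] h b by (simp add: floor_eq_iff)
    then show ?thesis using h by (simp add: tbit_def)
  qed
next
  case (Suc i)
  have e: "\<forall>i. e i \<in> {0,1}" using Suc.prems by (simp add: bin_def)
  have "tbit (yv e) (Suc i) = tbit (2 * yv e) i" by (simp add: tbit_double)
  also have "\<dots> = tbit (yv (\<lambda>i. e (Suc i))) i"
  proof -
    have "e 0 = 0 \<or> e 0 = 1" using e by auto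
    then show ?thesis
    proof
      assume "e 0 = 0" then show ?thesis using yv_shift[OF e] by simp
    next
      assume "e 0 = 1" then show ?thesis using yv_shift[OF e] tbit_plus1[of "yv (\<lambda>i. e (Suc i))" i] by (simp add: add.commute)
    qed
  qed
  finally show ?case using Suc.IH[OF bin_shift[OF Suc.prems]] by simp
qed

definition triadic :: "real set" where "triadic = {x. \<exists>n::nat. \<exists>j::int. x = of_int j / 3 ^ n}"

lemma countable_triadic: "countable triadic"
proof -
  have "triadic = (\<lambda>(n::nat, j::int). of_int j / 3 ^ n) ` UNIV" unfolding triadic_def by auto
  then show ?thesis by (metis countableI_type countable_image)
qed

lemma bmap_surj: assumes "c \<in> cantor_set" "c \<notin> triadic" shows "\<exists>y. 0 \<le> y \<and> y < 1 \<and> bmap y = c"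
proof -
  obtain d where d: "dig d" "c = cf d" using assms by (auto simp: cantor_set_eq)
  have ne: "\<forall>n. \<exists>i\<ge>n. d i = 0"
  proof (rule ccontr)
    assume "\<not> (\<forall>n. \<exists>i\<ge>n. d i = 0)"
    then obtain n where n: "\<forall>i\<ge>n. d i \<noteq> 0" by blast
    then have "(\<lambda>i. d (i + n)) = (\<lambda>_. 2)" using d(1) unfolding dig_def by (metis add.commute empty_iff insert_iff le_add1)
    then obtain j :: int where "3 ^ n * c = of_int j + 1" using cf_iter_int[OF d(1), of n] d(2) cf_two by auto
    then have "c = of_int (j + 1) / 3 ^ n" by (simp add: field_simps)
    then show False using assms(2) unfolding triadic_def by blast
  qed
  define e where "e i = d i / 2" for i
  have be: "bin e" unfolding bin_def e_def using ne d(1) by (auto simp: dig_def)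
  have "bdig (yv e) = d"
  proof
    fix i show "bdig (yv e) i = d i" unfolding bdig_def using tbit_yv[OF be, of i] by (simp add: e_def)
  qed
  then show ?thesis using yv_bounds[OF be] d by (intro exI[of _ "yv e"]) (simp add: bmap_def)
qed


definition J :: "nat \<Rightarrow> int \<Rightarrow> real set" where
  "J n k = {of_int k / 2 ^ n ..< (of_int k + 1) / 2 ^ n}"

lemma J_mem: "y \<in> J n k \<longleftrightarrow> \<lfloor>2 ^ n * y\<rfloor> = k"
  unfolding J_def by (auto simp: floor_eq_iff field_simps)

lemma fl_div: fixes z :: real assumes "n' \<le> n" shows "\<lfloor>2 ^ n' * z\<rfloor> = \<lfloor>2 ^ n * z\<rfloor> div 2 ^ (n - n')"
proof -
  have "(2::real) ^ n = 2 ^ n' * 2 ^ (n - n')" using assms by (simp add: power_add[symmetric])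
  then have "2 ^ n' * z = 2 ^ n * z / real_of_int (2 ^ (n - n'))" by simp
  then show ?thesis using floor_divide_real_eq_div[of "2 ^ (n - n')" "2 ^ n * z"] by simp
qed

lemma J_sets: "J n k \<in> sets lborel" unfolding J_def by simp

lemma J_measure: "emeasure lborel (J n k) = ennreal (1 / 2 ^ n)"
proof -
  have "of_int k / 2 ^ n \<le> (of_int k + 1) / (2 ^ n :: real)" by (simp add: divide_right_mono)
  then show ?thesis unfolding J_def by (simp add: diff_divide_distrib[symmetric])
qed

lemma tbit_J: assumes "y \<in> J n k" "z \<in> J n k" "i < n" shows "tbit y i = tbit z i"
proof -
  have "Suc i \<le> n" using assms by simp
  then show ?thesis using assms(1,2) unfolding tbit_def J_mem using fl_div[of "Suc i" n] by metis
qed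

lemma bmap_J: assumes "y \<in> J n k" "z \<in> J n k" shows "\<bar>bmap y - bmap z\<bar> \<le> 1 / 3 ^ n"
proof -
  have sy: "3 ^ n * bmap y = (\<Sum>i<n. bdig y i * 3 ^ (n - 1 - i)) + cf (\<lambda>i. bdig y (i + n))"
    unfolding bmap_def by (rule cf_iter[OF dig_bdig])
  have sz: "3 ^ n * bmap z = (\<Sum>i<n. bdig z i * 3 ^ (n - 1 - i)) + cf (\<lambda>i. bdig z (i + n))"
    unfolding bmap_def by (rule cf_iter[OF dig_bdig])
  have "(\<Sum>i<n. bdig y i * 3 ^ (n - 1 - i)) = (\<Sum>i<n. bdig z i * 3 ^ (n - 1 - i))"
    by (rule sum.cong) (auto simp: bdig_def tbit_J[OF assms])
  moreover have "0 \<le> cf (\<lambda>i. bdig y (i + n))" "cf (\<lambda>i. bdig y (i + n)) \<le> 1"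
    "0 \<le> cf (\<lambda>i. bdig z (i + n))" "cf (\<lambda>i. bdig z (i + n)) \<le> 1"
    using cf_nonneg cf_le1 dig_bdig by (auto simp: dig_def)
  ultimately have "\<bar>3 ^ n * bmap y - 3 ^ n * bmap z\<bar> \<le> 1" using sy sz by linarith
  then have "3 ^ n * \<bar>bmap y - bmap z\<bar> \<le> 1" by (simp add: abs_mult right_diff_distrib[symmetric])
  then show ?thesis by (simp add: field_simps)
qed

lemma pw: "(1 / 3 ^ n) powr log 3 2 = (1 / 2 ^ n :: real)"
proof -
  have "(1 / 3 ^ n) powr log 3 2 = 1 / ((3::real) ^ n) powr log 3 2"
    by (simp add: powr_divide)
  also have "((3::real) ^ n) powr log 3 2 = (3 powr log 3 2) ^ n"
  proof -
    have "((3::real) ^ n) powr log 3 2 = (3 powr real n) powr log 3 2" by (simp add: powr_realpow)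
    also have "\<dots> = 3 powr (log 3 2 * real n)" by (simp add: powr_powr mult.commute)
    also have "\<dots> = (3 powr log 3 2) powr real n" by (rule powr_powr[symmetric])
    also have "\<dots> = (3 powr log 3 2) ^ n" by (simp add: powr_realpow)
    finally show ?thesis .
  qed
  also have "(3::real) powr log 3 2 = 2" by simp
  finally show ?thesis by simp
qed

lemma bmap_J_diam: "bounded (bmap ` J n k) \<and> diameter (bmap ` J n k) \<le> 1 / 3 ^ n"
proof
  show b: "bounded (bmap ` J n k)"
    by (rule bounded_subset[OF bounded_closed_interval[of 0 1]]) (use bmap_C cantor_01 in auto)
  show "diameter (bmap ` J n k) \<le> 1 / 3 ^ n"
    by (rule diameter_le) (use bmap_J in \<open>auto simp: dist_norm\<close>)
qed

lemma small3: fixes \<delta> :: real assumes "\<delta> > 0" obtains n0 :: nat where "1 / 3 ^ n0 \<le> \<delta>"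
proof -
  obtain n where n: "1 / real (Suc n) < \<delta>" using reals_Archimedean[OF assms] by (auto simp: field_simps)
  have "real (Suc n) \<le> 3 ^ n"
  proof -
    have "Suc n \<le> 3 ^ n" by (induction n) auto
    then show ?thesis by (metis of_nat_le_iff of_nat_numeral of_nat_power)
  qed
  then have "1 / 3 ^ n \<le> 1 / real (Suc n)" by (intro divide_left_mono) auto
  then show ?thesis using n that[of n] by linarith
qed

lemma small2: fixes \<delta> :: real assumes "\<delta> > 0" obtains n0 :: nat where "1 / 2 ^ n0 \<le> \<delta>"
proof -
  obtain n where n: "1 / real (Suc n) < \<delta>" using reals_Archimedean[OF assms] by (auto simp: field_simps)
  have "real (Suc n) \<le> 2 ^ n"
  proof -
    have "Suc n \<le> 2 ^ n" by (induction n) auto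
    then show ?thesis by (metis of_nat_le_iff of_nat_numeral of_nat_power)
  qed
  then have "1 / 2 ^ n \<le> 1 / real (Suc n)" by (intro divide_left_mono) auto
  then show ?thesis using n that[of n] by linarith
qed

lemma null_transfer:
  assumes N: "N \<in> null_sets lborel"
  shows "nullH (log 3 2) (bmap ` N)"
  unfolding nullH_iff
proof (intro allI impI)
  fix \<delta> \<epsilon> :: real assume d: "\<delta> > 0" and e: "\<epsilon> > 0"
  let ?s = "log 3 2 :: real"
  obtain n0 :: nat where n0: "1 / 3 ^ n0 \<le> \<delta>" using small3[OF d] by blast
  have Nb: "N \<in> sets borel" using N by (simp add: null_sets_def)
  obtain G where G: "open G" "N \<subseteq> G" "emeasure lborel (G - N) < ennreal \<epsilon>"
    using outer_regular_lborel[OF Nb e] by blast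
  have Gb: "G \<in> sets lborel" using G(1) by simp
  have "emeasure lborel G \<le> emeasure lborel (N \<union> (G - N))" by (intro emeasure_mono) (use Nb Gb in auto)
  also have "\<dots> \<le> emeasure lborel N + emeasure lborel (G - N)"
    by (intro emeasure_subadditive) (use Nb Gb in auto)
  also have "\<dots> < ennreal \<epsilon>" using N G(3) by (simp add: null_sets_def)
  finally have Gm: "emeasure lborel G < ennreal \<epsilon>" .
  define ch where "ch n k \<longleftrightarrow> n0 \<le> n \<and> J n k \<subseteq> G \<and> (\<forall>n'. n0 \<le> n' \<and> n' < n \<longrightarrow> \<not> J n' (k div 2 ^ (n - n')) \<subseteq> G)" for n k
  have cov: "\<exists>n k. ch n k \<and> y \<in> J n k" if y: "y \<in> G" for y
  proof -
    obtain r where r: "r > 0" "ball y r \<subseteq> G" using G(1) y open_contains_ball by blast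
    obtain m :: nat where m: "1 / 2 ^ m \<le> r" using small2[OF r(1)] by blast
    define n1 where "n1 = max n0 m"
    have "(2::real) ^ n1 \<ge> 2 ^ m" unfolding n1_def by (intro power_increasing) auto
    then have "1 / 2 ^ n1 \<le> (1 / 2 ^ m :: real)" by (intro divide_left_mono) auto
    then have n1r: "1 / 2 ^ n1 \<le> r" using m by linarith
    let ?P = "\<lambda>n. n0 \<le> n \<and> J n \<lfloor>2 ^ n * y\<rfloor> \<subseteq> G"
    have "?P n1"
    proof
      show "n0 \<le> n1" by (simp add: n1_def)
      show "J n1 \<lfloor>2 ^ n1 * y\<rfloor> \<subseteq> G"
      proof
        fix z assume "z \<in> J n1 \<lfloor>2 ^ n1 * y\<rfloor>"
        then have "\<lfloor>2 ^ n1 * z\<rfloor> = \<lfloor>2 ^ n1 * y\<rfloor>" by (simp add: J_mem)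
        then have "\<bar>2 ^ n1 * z - 2 ^ n1 * y\<bar> < 1" by linarith
        then have "2 ^ n1 * \<bar>z - y\<bar> < 1" by (simp add: abs_mult right_diff_distrib[symmetric])
        then have "\<bar>z - y\<bar> < 1 / 2 ^ n1" by (simp add: field_simps)
        then have "z \<in> ball y r" using n1r by (simp add: dist_real_def abs_minus_commute)
        then show "z \<in> G" using r by blast
      qed
    qed
    define ns where "ns = (LEAST n. ?P n)"
    have Pns: "?P ns" unfolding ns_def by (rule LeastI[where P="?P", OF \<open>?P n1\<close>])
    have "ch ns \<lfloor>2 ^ ns * y\<rfloor>"
      unfolding ch_def
    proof (intro conjI allI impI)
      show "n0 \<le> ns" "J ns \<lfloor>2 ^ ns * y\<rfloor> \<subseteq> G" using Pns by auto
      fix n' assume n': "n0 \<le> n' \<and> n' < ns"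
      have "\<not> ?P n'" using n' not_less_Least unfolding ns_def by blast
      then show "\<not> J n' (\<lfloor>2 ^ ns * y\<rfloor> div 2 ^ (ns - n')) \<subseteq> G"
        using fl_div[of n' ns y] n' by auto
    qed
    moreover have "y \<in> J ns \<lfloor>2 ^ ns * y\<rfloor>" by (simp add: J_mem)
    ultimately show ?thesis by blast
  qed
  have disj1: "J n k \<inter> J n' k' = {}" if "ch n k" "ch n' k'" "n' \<le> n" "(n, k) \<noteq> (n', k')" for n k n' k'
  proof (rule ccontr)
    assume "J n k \<inter> J n' k' \<noteq> {}"
    then obtain y where y: "y \<in> J n k" "y \<in> J n' k'" by blast
    have kk: "k' = k div 2 ^ (n - n')" using y fl_div[OF that(3), of y] by (simp add: J_mem)
    show False
    proof (cases "n' < n")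
      case True
      then show False using that(1,2) kk unfolding ch_def by blast
    next
      case False
      then have "n' = n" using that(3) by simp
      then show False using kk that(4) by simp
    qed
  qed
  have disj: "J n k \<inter> J n' k' = {}" if "ch n k" "ch n' k'" "(n, k) \<noteq> (n', k')" for n k n' k'
  proof (cases "n' \<le> n")
    case True then show ?thesis using disj1 that by blast
  next
    case False then show ?thesis using disj1[of n' k' n k] that by auto
  qed
  define f where "f = from_nat_into (UNIV :: (nat \<times> int) set)"
  have bij: "bij f" unfolding f_def
    by (rule bij_betw_from_nat_into) (auto simp: infinite_UNIV_char_0 finite_prod)
  define V where "V i = (if ch (fst (f i)) (snd (f i)) then J (fst (f i)) (snd (f i)) else {})" for i
  define U where "U i = bmap ` V i" for i
  have "U \<in> covers \<delta> (bmap ` N)"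
    unfolding covers_def
  proof (intro CollectI conjI allI)
    show "bmap ` N \<subseteq> (\<Union>i. U i)"
    proof
      fix x assume "x \<in> bmap ` N"
      then obtain y where y: "y \<in> N" "x = bmap y" by blast
      then obtain n k where nk: "ch n k" "y \<in> J n k" using cov G(2) by blast
      obtain i where "f i = (n, k)" using bij by (metis bij_pointE)
      then have "y \<in> V i" using nk by (simp add: V_def)
      then show "x \<in> (\<Union>i. U i)" using y by (auto simp: U_def)
    qed
    fix i
    show "bounded (U i)" using bmap_J_diam by (simp add: U_def V_def)
    have "diameter (U i) \<le> 1 / 3 ^ n0"
    proof (cases "ch (fst (f i)) (snd (f i))")
      case True
      then have "n0 \<le> fst (f i)" by (simp add: ch_def)
      then have "1 / 3 ^ fst (f i) \<le> (1 / 3 ^ n0 :: real)" by (intro divide_left_mono power_increasing) auto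
      then show ?thesis using True bmap_J_diam[of "fst (f i)" "snd (f i)"] by (simp add: U_def V_def)
    next
      case False then show ?thesis by (simp add: U_def V_def)
    qed
    then show "diameter (U i) \<le> \<delta>" using n0 by linarith
  qed
  have "(\<Sum>i. ennreal (diameter (U i) powr ?s)) \<le> (\<Sum>i. emeasure lborel (V i))"
  proof (intro suminf_le allI)
    fix i
    show "ennreal (diameter (U i) powr ?s) \<le> emeasure lborel (V i)"
    proof (cases "ch (fst (f i)) (snd (f i))")
      case True
      have "diameter (U i) powr ?s \<le> (1 / 3 ^ fst (f i)) powr ?s"
        using True bmap_J_diam[of "fst (f i)" "snd (f i)"]
        by (intro powr_mono2) (auto simp: U_def V_def diameter_ge_0)
      also have "\<dots> = 1 / 2 ^ fst (f i)" by (rule pw)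
      finally show ?thesis using True by (simp add: V_def J_measure ennreal_leI)
    next
      case False then show ?thesis by (simp add: U_def V_def)
    qed
  qed auto
  also have "\<dots> = emeasure lborel (\<Union>i. V i)"
  proof (rule suminf_emeasure)
    show "range V \<subseteq> sets lborel" using J_sets by (auto simp: V_def)
    show "disjoint_family V"
      unfolding disjoint_family_on_def
    proof (intro ballI impI)
      fix i j :: nat assume "i \<in> UNIV" "j \<in> UNIV" "i \<noteq> j"
      then have "f i \<noteq> f j" using bij by (metis bij_pointE)
      then show "V i \<inter> V j = {}" unfolding V_def using disj by (auto simp: prod_eq_iff)
    qed
  qed
  also have "\<dots> \<le> emeasure lborel G"
    by (intro emeasure_mono) (use Gb in \<open>auto simp: V_def ch_def\<close>)
  finally show "\<exists>U\<in>covers \<delta> (bmap ` N). (\<Sum>i. ennreal (diameter (U i) powr ?s)) < ennreal \<epsilon>"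
    using Gm \<open>U \<in> covers \<delta> (bmap ` N)\<close> by (meson order.strict_trans1)
qed


definition DJ :: "nat \<Rightarrow> int \<Rightarrow> real set" where
  "DJ n k = {of_int k / 2 ^ n ..< (of_int k + 1) / 2 ^ n}"

lemma DJ_mem: "y \<in> DJ n k \<longleftrightarrow> \<lfloor>2 ^ n * y\<rfloor> = k"
  unfolding DJ_def by (auto simp: floor_eq_iff field_simps)

lemma DJ_measure: "emeasure lborel (DJ n k) = ennreal (1 / 2 ^ n)"
proof -
  have "of_int k / 2 ^ n \<le> (of_int k + 1) / (2 ^ n :: real)" by (simp add: divide_right_mono)
  then show ?thesis unfolding DJ_def by (simp add: diff_divide_distrib[symmetric])
qed

lemma borel_dyadic:
  "sets borel = sigma_sets UNIV (range (\<lambda>(n::nat, k::int). {..< of_int k / 2 ^ n :: real}))"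
proof -
  let ?F = "\<lambda>(n::nat, k::int). {..< of_int k / 2 ^ n :: real}"
  have b0: "borel = sigma UNIV (range (lessThan :: real \<Rightarrow> real set))"
    using borel_eq_lessThan[where 'a=real] by (simp add: eucl_lessThan)
  have "borel = sigma UNIV (?F ` UNIV)"
  proof (rule borel_eq_sigmaI1[OF b0])
    fix X assume "X \<in> range (lessThan :: real \<Rightarrow> real set)"
    then obtain x where x: "X = {..<x}" by blast
    have "{..<x} = (\<Union>m. ?F (m, \<lfloor>2 ^ m * x\<rfloor>))"
    proof (intro set_eqI iffI)
      fix y assume "y \<in> {..<x}"
      then have "0 < x - y" by simp
      then obtain m :: nat where m: "1 / (x - y) < 2 ^ m"
        using real_arch_pow[of 2 "1 / (x - y)"] by auto
      then have "1 < 2 ^ m * (x - y)" using \<open>0 < x - y\<close> by (simp add: field_simps)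
      then have "2 ^ m * y < of_int \<lfloor>2 ^ m * x\<rfloor>" by (simp add: right_diff_distrib) linarith
      then have "y < of_int \<lfloor>2 ^ m * x\<rfloor> / 2 ^ m" by (simp add: field_simps)
      then show "y \<in> (\<Union>m. ?F (m, \<lfloor>2 ^ m * x\<rfloor>))" by auto
    next
      fix y assume "y \<in> (\<Union>m. ?F (m, \<lfloor>2 ^ m * x\<rfloor>))"
      then obtain m :: nat where "y < of_int \<lfloor>2 ^ m * x\<rfloor> / 2 ^ m" by auto
      moreover have "of_int \<lfloor>2 ^ m * x\<rfloor> / 2 ^ m \<le> x" by (simp add: field_simps)
      ultimately show "y \<in> {..<x}" by simp
    qed
    moreover have "?F (m, \<lfloor>2 ^ m * x\<rfloor>) \<in> sigma_sets UNIV (?F ` UNIV)" for m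
      by (rule sigma_sets.Basic) blast
    then have "(\<Union>m. ?F (m, \<lfloor>2 ^ m * x\<rfloor>)) \<in> sigma_sets UNIV (?F ` UNIV)" by (rule sigma_sets.Union)
    ultimately show "X \<in> sets (sigma UNIV (?F ` UNIV))"
      unfolding x by simp
  qed auto
  then have "sets borel = sets (sigma UNIV (?F ` UNIV))" by simp
  also have "\<dots> = sigma_sets UNIV (?F ` UNIV)" by (rule sets_measure_of) simp
  finally show ?thesis .
qed

lemma inv_pow: fixes A :: "real set" assumes inv2: "\<And>y. y \<in> A \<longleftrightarrow> 2 * y \<in> A" shows "y \<in> A \<longleftrightarrow> 2 ^ n * y \<in> A"
proof (induction n arbitrary: y)
  case 0 then show ?case by simp
next
  case (Suc n)
  have e: "2 ^ Suc n * y = 2 ^ n * (2 * y)" by simp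
  show ?case unfolding e using inv2[of y] Suc.IH[of "2*y"] by blast
qed

lemma inv_int: fixes A :: "real set" assumes inv1: "\<And>y. y \<in> A \<longleftrightarrow> y + 1 \<in> A" shows "y \<in> A \<longleftrightarrow> y + of_int k \<in> A"
proof -
  have p: "y \<in> A \<longleftrightarrow> y + of_nat m \<in> A" for y m
  proof (induction m arbitrary: y)
    case 0 then show ?case by simp
  next
    case (Suc m)
    have e: "y + of_nat (Suc m) = (y + 1) + of_nat m" by simp
    show ?case unfolding e using inv1[of y] Suc.IH[of "y+1"] by blast
  qed
  show ?thesis
  proof (cases "k \<ge> 0")
    case True then show ?thesis using p[of y "nat k"] by simp
  next
    case False
    then show ?thesis using p[of "y + of_int k" "nat (-k)"] by simp
  qed
qed

lemma erg:
  fixes A :: "real set"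
  assumes A: "A \<in> sets borel" and inv2: "\<And>y. y \<in> A \<longleftrightarrow> 2 * y \<in> A" and inv1: "\<And>y. y \<in> A \<longleftrightarrow> y + 1 \<in> A"
  shows "emeasure lborel (A \<inter> {0..<1}) = 0 \<or> emeasure lborel (A \<inter> {0..<1}) = 1"
proof -
  define I where "I = {0..<1::real}"
  define a where "a = emeasure lborel (A \<inter> I)"
  have AI: "A \<inter> I \<in> sets borel" using A by (simp add: I_def)
  have a1: "a \<le> 1"
  proof -
    have "emeasure lborel (A \<inter> I) \<le> emeasure lborel I" by (rule emeasure_mono) (auto simp: I_def)
    then show ?thesis by (simp add: a_def I_def)
  qed
  have AJ: "emeasure lborel (A \<inter> DJ n k) = a * ennreal (1 / 2 ^ n)" if k: "0 \<le> k" "k < 2 ^ n" for n k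
  proof -
    have c: "(2::real) ^ n \<noteq> 0" by simp
    have ind: "indicator (A \<inter> I) (- of_int k + 2 ^ n * x) = (indicator (A \<inter> DJ n k) x :: ennreal)" for x
    proof -
      have "x \<in> A \<longleftrightarrow> - of_int k + 2 ^ n * x \<in> A"
        using inv_pow[OF inv2, of x n] inv_int[OF inv1, of "2 ^ n * x" "-k"] by simp
      moreover have "x \<in> DJ n k \<longleftrightarrow> - of_int k + 2 ^ n * x \<in> I"
        unfolding DJ_def I_def by (auto simp: field_simps)
      ultimately show ?thesis by (simp add: indicator_def)
    qed
    have mAJ: "A \<inter> DJ n k \<in> sets borel" using A by (simp add: DJ_def)
    have "a = (\<integral>\<^sup>+x. indicator (A \<inter> I) x \<partial>lborel)" unfolding a_def using AI by simp
    also have "\<dots> = ennreal \<bar>2 ^ n\<bar> * (\<integral>\<^sup>+x. indicator (A \<inter> I) (- of_int k + 2 ^ n * x) \<partial>lborel)"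
      by (rule nn_integral_real_affine[OF _ c]) (use AI in simp)
    also have "\<dots> = ennreal (2 ^ n) * emeasure lborel (A \<inter> DJ n k)"
      unfolding ind using mAJ by simp
    finally have "a * ennreal (1 / 2 ^ n) = ennreal (1 / 2 ^ n) * ennreal (2 ^ n) * emeasure lborel (A \<inter> DJ n k)"
      by (simp add: mult.commute mult.left_commute)
    also have "ennreal (1 / 2 ^ n) * ennreal (2 ^ n) = 1"
      by (simp flip: ennreal_mult)
    finally show ?thesis by simp
  qed
  have AK: "emeasure lborel (A \<inter> {0..< of_nat k / 2 ^ n}) = a * ennreal (of_nat k / 2 ^ n)" if "k \<le> 2 ^ n" for n k
    using that
  proof (induction k)
    case 0 then show ?case by simp
  next
    case (Suc k)
    have split: "A \<inter> {0..< of_nat (Suc k) / 2 ^ n} = (A \<inter> {0..< of_nat k / 2 ^ n}) \<union> (A \<inter> DJ n (int k))"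
    proof -
      have "{0..< of_nat (Suc k) / 2 ^ n} = {0..< of_nat k / 2 ^ n} \<union> {of_nat k / 2 ^ n ..< of_nat (Suc k) / (2 ^ n :: real)}"
        by (rule ivl_disj_un_two(3)[symmetric]) (auto simp: divide_right_mono)
      then show ?thesis by (simp add: DJ_def Int_Un_distrib add.commute)
    qed
    have "emeasure lborel (A \<inter> {0..< of_nat (Suc k) / 2 ^ n}) = emeasure lborel (A \<inter> {0..< of_nat k / 2 ^ n}) + emeasure lborel (A \<inter> DJ n (int k))"
      unfolding split by (rule plus_emeasure[symmetric]) (use A in \<open>auto simp: DJ_def\<close>)
    also have "\<dots> = a * ennreal (of_nat k / 2 ^ n) + a * ennreal (1 / 2 ^ n)"
      using Suc AJ[of "int k" n] by simp
    also have "\<dots> = a * ennreal (of_nat (Suc k) / 2 ^ n)"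
      by (simp add: distrib_left[symmetric] ennreal_plus[symmetric] add_divide_distrib add.commute del: ennreal_plus)
    finally show ?case .
  qed
  define M1 where "M1 = density lborel (indicator (A \<inter> I))"
  define M2 where "M2 = density lborel (\<lambda>x. a * indicator I x)"
  have M1e: "emeasure M1 X = emeasure lborel (A \<inter> I \<inter> X)" if "X \<in> sets borel" for X
  proof -
    have "emeasure M1 X = (\<integral>\<^sup>+x. indicator (A \<inter> I) x * indicator X x \<partial>lborel)"
      unfolding M1_def by (rule emeasure_density) (use AI that in auto)
    also have "\<dots> = (\<integral>\<^sup>+x. indicator (A \<inter> I \<inter> X) x \<partial>lborel)"
      by (intro nn_integral_cong) (simp add: indicator_def)
    also have "\<dots> = emeasure lborel (A \<inter> I \<inter> X)" using AI that by simp
    finally show ?thesis .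
  qed
  have M2e: "emeasure M2 X = a * emeasure lborel (I \<inter> X)" if "X \<in> sets borel" for X
  proof -
    have "emeasure M2 X = (\<integral>\<^sup>+x. a * indicator I x * indicator X x \<partial>lborel)"
      unfolding M2_def by (rule emeasure_density) (use that in \<open>auto simp: I_def\<close>)
    also have "\<dots> = (\<integral>\<^sup>+x. a * indicator (I \<inter> X) x \<partial>lborel)"
      by (intro nn_integral_cong) (simp add: indicator_def)
    also have "\<dots> = a * emeasure lborel (I \<inter> X)" using that by (simp add: nn_integral_cmult I_def)
    finally show ?thesis .
  qed
  let ?E = "range (\<lambda>(n::nat, k::int). {..< of_int k / 2 ^ n :: real})"
  have "M1 = M2"
  proof (rule measure_eqI_generator_eq[where \<Omega>=UNIV and E="?E" and A="\<lambda>i. {..< of_int (int i) / 2 ^ 0}"])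
    show "Int_stable ?E"
    proof (rule Int_stableI)
      fix X Y assume "X \<in> ?E" "Y \<in> ?E"
      then obtain n k n' k' where X: "X = {..< of_int k / 2 ^ n :: real}" and Y: "Y = {..< of_int k' / 2 ^ n' :: real}"
        by auto
      show "X \<inter> Y \<in> ?E"
      proof (cases "of_int k / 2 ^ n \<le> (of_int k' / 2 ^ n' :: real)")
        case True
        then have "X \<inter> Y = X" unfolding X Y by auto
        then show ?thesis using X by auto
      next
        case False
        then have "X \<inter> Y = Y" unfolding X Y by auto
        then show ?thesis using Y by auto
      qed
    qed
    show "?E \<subseteq> Pow UNIV" by simp
    show "sets M1 = sigma_sets UNIV ?E" unfolding M1_def using borel_dyadic by simp
    show "sets M2 = sigma_sets UNIV ?E" unfolding M2_def using borel_dyadic by simp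
    show "range (\<lambda>i. {..< of_int (int i) / 2 ^ 0 :: real}) \<subseteq> ?E"
    proof (rule image_subsetI)
      fix i :: nat
      show "{..< of_int (int i) / 2 ^ 0 :: real} \<in> ?E"
        by (rule image_eqI[where x="(0::nat, int i)"]) simp_all
    qed
    show "(\<Union>i. {..< of_int (int i) / 2 ^ 0 :: real}) = UNIV"
      by (auto simp: real_arch_simple) (meson reals_Archimedean2)
    show "emeasure M1 {..< of_int (int i) / 2 ^ 0 :: real} \<noteq> \<infinity>" for i
    proof -
      have "emeasure M1 {..< of_int (int i) / 2 ^ 0 :: real} = emeasure lborel (A \<inter> I \<inter> {..< of_int (int i) / 2 ^ 0 :: real})"
        by (rule M1e) simp
      also have "\<dots> \<le> emeasure lborel I" by (rule emeasure_mono) (auto simp: I_def)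
      finally have "emeasure M1 {..< of_int (int i) / 2 ^ 0 :: real} \<le> emeasure lborel I" .
      then show ?thesis by (auto simp: I_def top_unique)
    qed
    fix X assume "X \<in> ?E"
    then obtain n k where X: "X = {..< of_int k / 2 ^ n :: real}" by auto
    have Xb: "X \<in> sets borel" using X by simp
    show "emeasure M1 X = emeasure M2 X"
      unfolding M1e[OF Xb] M2e[OF Xb]
    proof (cases "k \<le> 0")
      case True
      then have "of_int k / 2 ^ n \<le> (0::real)" by (simp add: divide_nonpos_pos)
      then have "I \<inter> X = {}" unfolding X I_def by auto
      then show "emeasure lborel (A \<inter> I \<inter> X) = a * emeasure lborel (I \<inter> X)" by (simp add: Int_assoc)
    next
      case False
      show "emeasure lborel (A \<inter> I \<inter> X) = a * emeasure lborel (I \<inter> X)"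
      proof (cases "k \<le> 2 ^ n")
        case True
        define k' where "k' = nat k"
        have kk: "of_int k = (of_nat k' :: real)" "k' \<le> 2 ^ n" using False True by (auto simp: k'_def)
        have h: "of_nat k' / 2 ^ n \<le> (1::real)" using kk(2)
          by (simp add: field_simps)
        have IX: "I \<inter> X = {0..< of_nat k' / 2 ^ n}"
        proof
          show "I \<inter> X \<subseteq> {0..< of_nat k' / 2 ^ n}" unfolding X I_def kk(1) by auto
          show "{0..< of_nat k' / 2 ^ n} \<subseteq> I \<inter> X"
          proof
            fix x :: real assume "x \<in> {0..< of_nat k' / 2 ^ n}"
            then have x: "0 \<le> x" "x < of_nat k' / 2 ^ n" by auto
            then have "x < 1" using h by linarith
            then show "x \<in> I \<inter> X" unfolding X I_def kk(1) using x by auto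
          qed
        qed
        have "emeasure lborel (A \<inter> I \<inter> X) = a * ennreal (of_nat k' / 2 ^ n)"
          using AK[OF kk(2)] by (simp add: Int_assoc IX)
        then show ?thesis unfolding IX by simp
      next
        case False
        then have h: "1 \<le> of_int k / (2 ^ n :: real)" by (simp add: field_simps)
        have IX: "I \<inter> X = I"
        proof
          show "I \<subseteq> I \<inter> X"
          proof
            fix x assume "x \<in> I"
            then have "x < 1" by (simp add: I_def)
            then have "x < of_int k / 2 ^ n" using h by linarith
            then show "x \<in> I \<inter> X" using \<open>x \<in> I\<close> unfolding X by simp
          qed
        qed auto
        then show ?thesis by (simp add: Int_assoc I_def a_def)
      qed
    qed
  qed
  then have "emeasure M1 A = emeasure M2 A" by simp
  then have "a = a * a" using M1e[OF A] M2e[OF A] unfolding a_def by (simp add: Int_commute Int_assoc)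
  moreover obtain r where r: "a = ennreal r" "0 \<le> r" using a1 by (cases a rule: ennreal_cases) (auto simp: top_unique)
  ultimately have "r = r * r" by (simp add: ennreal_mult[symmetric])
  then have "r = 0 \<or> r = 1" by (metis mult_cancel_left2 mult.commute mult_zero_left)
  then show ?thesis using r unfolding a_def I_def by auto
qed


lemma gauss_dense: fixes z :: complex and r :: real assumes r: "r > 0" shows "\<exists>a b :: rat. dist z (Complex (of_rat a) (of_rat b)) < r"
proof -
  obtain a where a: "a \<in> \<rat>" "Re z - r/2 < a" "a < Re z + r/2" using Rats_dense_in_real[of "Re z - r/2" "Re z + r/2"] r by auto
  obtain b where b: "b \<in> \<rat>" "Im z - r/2 < b" "b < Im z + r/2" using Rats_dense_in_real[of "Im z - r/2" "Im z + r/2"] r by auto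
  obtain a' where a': "a = of_rat a'" using a(1) Rats_cases by blast
  obtain b' where b': "b = of_rat b'" using b(1) Rats_cases by blast
  have "dist z (Complex a b) \<le> \<bar>Re z - a\<bar> + \<bar>Im z - b\<bar>"
    using cmod_le[of "z - Complex a b"] by (simp add: dist_norm)
  also have "\<dots> < r" using a b by auto
  finally show ?thesis using a' b' by blast
qed

lemma ae_const:
  fixes g :: "real \<Rightarrow> complex"
  assumes g: "g \<in> borel_measurable borel"
  and zo: "\<And>B::complex set. B \<in> sets borel \<Longrightarrow> emeasure lborel (g -` B \<inter> {0..<1}) = 0 \<or> emeasure lborel (g -` B \<inter> {0..<1}) = 1"
  shows "\<exists>c. {y \<in> {0..<1}. g y \<noteq> c} \<in> null_sets lborel"
proof -
  define I where "I = {0..<1::real}"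
  have Im: "emeasure lborel I = 1" by (simp add: I_def)
  have Ib: "I \<in> sets lborel" by (simp add: I_def)
  define Q where "Q = (\<lambda>(a, b). Complex (of_rat a) (of_rat b)) ` (UNIV :: (rat \<times> rat) set)"
  have cQ: "countable Q" unfolding Q_def by (metis countableI_type countable_image)
  have dQ: "\<exists>q\<in>Q. dist z q < r" if "r > 0" for z r
    using gauss_dense[OF that, of z] unfolding Q_def by auto
  have pre: "g -` B \<in> sets lborel" if "B \<in> sets borel" for B
    using measurable_sets[OF g that] by simp
  define S where "S q m = g -` ball q (1 / (real m + 1)) \<inter> I" for q m
  have Sb: "S q m \<in> sets lborel" for q m unfolding S_def using pre[of "ball q (1 / (real m + 1))"] Ib by auto
  have ex: "\<exists>q\<in>Q. emeasure lborel (S q m) = 1" for m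
  proof (rule ccontr)
    assume "\<not> (\<exists>q\<in>Q. emeasure lborel (S q m) = 1)"
    then have z: "emeasure lborel (S q m) = 0" if "q \<in> Q" for q
      using zo[of "ball q (1 / (real m + 1))"] that by (auto simp: S_def I_def)
    have "(\<Union>q\<in>Q. S q m) \<in> null_sets lborel"
      by (rule null_sets_UN'[OF cQ]) (use z Sb in auto)
    moreover have "I \<subseteq> (\<Union>q\<in>Q. S q m)"
    proof
      fix y assume y: "y \<in> I"
      obtain q where "q \<in> Q" "dist (g y) q < 1 / (real m + 1)" using dQ[of "1 / (real m + 1)" "g y"] by auto
      then show "y \<in> (\<Union>q\<in>Q. S q m)" using y by (auto simp: S_def dist_commute)
    qed
    ultimately have "I \<in> null_sets lborel" using null_sets_subset Ib by blast
    then show False using Im by auto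
  qed
  then obtain q where q: "\<And>m. q m \<in> Q" "\<And>m. emeasure lborel (S (q m) m) = 1" by metis
  define Bad where "Bad = (\<Union>m. I - S (q m) m)"
  have "I - S (q m) m \<in> null_sets lborel" for m
  proof -
    have "S (q m) m \<subseteq> I" by (auto simp: S_def)
    then have "emeasure lborel (I - S (q m) m) = emeasure lborel I - emeasure lborel (S (q m) m)"
      by (intro emeasure_Diff) (use q(2) Sb Ib in auto)
    then show ?thesis using q(2) Im Ib Sb by auto
  qed
  then have Bn: "Bad \<in> null_sets lborel" unfolding Bad_def by (intro null_sets_UN) blast
  have "\<not> I \<subseteq> Bad"
  proof
    assume "I \<subseteq> Bad"
    then have "I \<in> null_sets lborel" using null_sets_subset Bn Ib by blast
    then show False using Im by auto
  qed
  then obtain y0 where y0: "y0 \<in> I" "y0 \<notin> Bad" by blast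
  have close: "dist (g y) (q m) < 1 / (real m + 1)" if "y \<in> I" "y \<notin> Bad" for y m
    using that by (auto simp: Bad_def S_def dist_commute)
  have sub: "{y \<in> I. g y \<noteq> g y0} \<subseteq> Bad"
  proof (rule ccontr)
    assume "\<not> {y \<in> I. g y \<noteq> g y0} \<subseteq> Bad"
    then obtain y where y: "y \<in> I" "y \<notin> Bad" "g y \<noteq> g y0" by blast
    then have dpos: "dist (g y) (g y0) > 0" by simp
    obtain m :: nat where m: "2 / dist (g y) (g y0) < real m + 1"
      using reals_Archimedean2[of "2 / dist (g y) (g y0)"] by (metis add.commute add_strict_increasing2 zero_less_one less_eq_real_def)
    have "dist (g y) (g y0) \<le> dist (g y) (q m) + dist (g y0) (q m)" by (rule dist_triangle2)
    also have "\<dots> < 2 / (real m + 1)" using close[OF y(1,2), of m] close[OF y0, of m] by simp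
    finally have "dist (g y) (g y0) * (real m + 1) < 2" by (simp add: field_simps)
    moreover have "2 < dist (g y) (g y0) * (real m + 1)" using m dpos by (simp add: field_simps)
    ultimately show False by simp
  qed
  have mb: "{y \<in> I. g y \<noteq> g y0} \<in> sets lborel"
  proof -
    have "{y \<in> I. g y \<noteq> g y0} = g -` (- {g y0}) \<inter> I" by auto
    then show ?thesis using pre[of "- {g y0}"] Ib by auto
  qed
  show ?thesis using null_sets_subset[OF Bn mb sub] unfolding I_def by blast
qed


theorem proposition3p4:
  fixes \<phi> :: "real \<Rightarrow> complex"
  assumes meas: "\<phi> \<in> borel_measurable (restrict_space borel cantor_R)"
    and bdd: "bounded {x \<in> cantor_R. \<phi> x \<noteq> 0}"
    and feq: "\<And>x. x \<in> cantor_R \<Longrightarrow> \<phi> x = \<phi> (3 * x) + \<phi> (3 * x - 2)"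
  shows "\<exists>c::complex. hausdorff_outer (log 3 2)
           {x \<in> cantor_R. \<phi> x \<noteq> c * indicator cantor_set x} = 0"
proof -
  obtain M where M: "\<And>x. x \<in> {x \<in> cantor_R. \<phi> x \<noteq> 0} \<Longrightarrow> norm x \<le> M"
    using bdd unfolding bounded_iff by blast
  interpret sol \<phi> M
  proof
    show "\<And>x. x \<in> cantor_R \<Longrightarrow> \<phi> x = \<phi> (3 * x) + \<phi> (3 * x - 2)" by (rule feq)
    show "\<And>x. x \<in> cantor_R \<Longrightarrow> \<phi> x \<noteq> 0 \<Longrightarrow> \<bar>x\<bar> \<le> M" using M by auto
  qed
  define g where "g y = \<phi> (bmap y)" for y
  have bR: "bmap y \<in> cantor_R" for y using cantor_plus_int_R[OF bmap_C, of y 0] by simp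
  have gm: "g \<in> borel_measurable borel"
  proof -
    have "bmap \<in> measurable borel (restrict_space borel cantor_R)"
      by (rule measurable_restrict_space2) (use bR bmap_measurable in auto)
    then show ?thesis unfolding g_def using meas by (rule measurable_comp[unfolded comp_def])
  qed
  have g2: "g (2 * y) = g y" for y
    unfolding g_def bmap_double using shift_inv[OF dig_bdig, of y] by (simp add: bmap_def)
  have g1: "g (y + 1) = g y" for y
    unfolding g_def bmap_plus1 ..
  have zo: "emeasure lborel (g -` B \<inter> {0..<1}) = 0 \<or> emeasure lborel (g -` B \<inter> {0..<1}) = 1"
    if B: "B \<in> sets borel" for B
  proof (rule erg)
    show "g -` B \<in> sets borel" using measurable_sets[OF gm B] by simp
    show "y \<in> g -` B \<longleftrightarrow> 2 * y \<in> g -` B" for y using g2 by simp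
    show "y \<in> g -` B \<longleftrightarrow> y + 1 \<in> g -` B" for y using g1 by simp
  qed
  obtain c where c: "{y \<in> {0..<1}. g y \<noteq> c} \<in> null_sets lborel"
    using ae_const[OF gm zo] by blast
  let ?s = "log 3 2 :: real"
  have s0: "0 \<le> ?s" by simp
  define N0 where "N0 = {z \<in> cantor_set. \<phi> z \<noteq> c}"
  have "N0 \<subseteq> bmap ` {y \<in> {0..<1}. g y \<noteq> c} \<union> triadic"
  proof
    fix z assume z: "z \<in> N0"
    show "z \<in> bmap ` {y \<in> {0..<1}. g y \<noteq> c} \<union> triadic"
    proof (cases "z \<in> triadic")
      case False
      then obtain y where "0 \<le> y" "y < 1" "bmap y = z" using bmap_surj z by (auto simp: N0_def)
      then show ?thesis using z by (auto simp: N0_def g_def)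
    qed simp
  qed
  then have nN0: "nullH ?s N0"
    using nullH_mono nullH_Un null_transfer[OF c] nullH_countable[OF countable_triadic] by blast
  define E where "E = N0 \<union> {0, 1}"
  have nE: "nullH ?s E" unfolding E_def by (rule nullH_Un[OF nN0 nullH_countable]) simp
  have nU: "nullH ?s (\<Union>p\<in>(UNIV :: (nat \<times> int) set). (\<lambda>z. (z + of_int (snd p)) / 3 ^ fst p) ` E)"
  proof (rule nullH_UN_countable)
    show "countable (UNIV :: (nat \<times> int) set)" by simp
    fix p :: "nat \<times> int"
    show "nullH ?s ((\<lambda>z. (z + of_int (snd p)) / 3 ^ fst p) ` E)"
    proof (rule nullH_lip[OF _ s0 nE])
      fix x y :: real
      have "dist ((x + of_int (snd p)) / 3 ^ fst p) ((y + of_int (snd p)) / 3 ^ fst p) = \<bar>x - y\<bar> / 3 ^ fst p"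
        by (simp add: dist_real_def diff_divide_distrib[symmetric])
      also have "\<dots> \<le> \<bar>x - y\<bar>" using mult_left_mono[of 1 "3 ^ fst p" "\<bar>x - y\<bar>"] one_le_power[of "3::real" "fst p"] by (simp add: divide_le_eq)
      finally show "dist ((x + of_int (snd p)) / 3 ^ fst p) ((y + of_int (snd p)) / 3 ^ fst p) \<le> dist x y"
        by (simp add: dist_real_def)
    qed
  qed
  have "{x \<in> cantor_R. \<phi> x \<noteq> c * indicator cantor_set x} \<subseteq> (\<Union>p\<in>(UNIV :: (nat \<times> int) set). (\<lambda>z. (z + of_int (snd p)) / 3 ^ fst p) ` E)"
  proof
    fix x assume x: "x \<in> {x \<in> cantor_R. \<phi> x \<noteq> c * indicator cantor_set x}"
    then obtain n m z where z: "z \<in> cantor_set" "x = (z + of_int m) / 3 ^ n" by (auto simp: R_char)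
    have "z \<in> E"
    proof (rule ccontr)
      assume "z \<notin> E"
      then have "z \<noteq> 0" "z \<noteq> 1" "\<phi> z = c" using z(1) by (auto simp: E_def N0_def)
      then have "\<phi> x = c * indicator cantor_set x" using classify[OF z(1)] z(2) by simp
      then show False using x by simp
    qed
    then show "x \<in> (\<Union>p\<in>(UNIV :: (nat \<times> int) set). (\<lambda>z. (z + of_int (snd p)) / 3 ^ fst p) ` E)"
      using z(2) by (intro UN_I[of "(n, m)"]) auto
  qed
  then have "nullH ?s {x \<in> cantor_R. \<phi> x \<noteq> c * indicator cantor_set x}" using nullH_mono nU by blast
  then show ?thesis unfolding nullH_def by blast
qed


end
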